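(* Let $n\ge 2$ and let $V$ be an $n$-element subset of $\mathbb R$ that is optimal for $3$-term arithmetic progressions. Then at least one of the two $(n-1)$-element sets $V\setminus\{\min V\}$ and $V\setminus\{\max V\}$ is optimal for $3$-term arithmetic progressions.
   Context: A $k$-term arithmetic progression is a set $\{a,a+d,\dots,a+(k-1)d\}\subseteq\mathbb R$ with $d>0$; $S_{\mathcal A_k}(V)$ is the number of $k$-term arithmetic progressions contained in $V$. An $m$-set $V$ is optimal for $k$-term arithmetic progressions if $S_{\mathcal A_k}(V)$ equals the maximum of $S_{\mathcal A_k}(W)$ over all $m$-subsets $W\subseteq\mathbb R$, namely $(m-r)(m+r-k+1)/(2k-2)$ where $r$ is the remainder of $m$ modulo $k-1$. *)

theory Defs
  imports Main "HOL.Real"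
begin

definition is_kAP :: "nat \<Rightarrow> real set \<Rightarrow> bool" where
  "is_kAP k P \<longleftrightarrow> (\<exists>a d. d > 0 \<and> P = {a + real i * d | i. i < k})"

definition S_AP :: "nat \<Rightarrow> real set \<Rightarrow> nat" where
  "S_AP k V = card {P. is_kAP k P \<and> P \<subseteq> V}"

definition optimal_AP :: "nat \<Rightarrow> real set \<Rightarrow> bool" where
  "optimal_AP k V \<longleftrightarrow> finite V \<and>
     (\<forall>W. finite W \<and> card W = card V \<longrightarrow> S_AP k W \<le> S_AP k V)"

end

theory Submission
  imports Defs
begin

definition Cs :: "real set \<Rightarrow> real \<Rightarrow> real set" where
  "Cs V b = {a\<in>V. a < b \<and> 2*b - a \<in> V}"
definition Lo :: "real set \<Rightarrow> real \<Rightarrow> real set" where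
  "Lo V b = {a\<in>V. a < b}"
definition Up :: "real set \<Rightarrow> real \<Rightarrow> real set" where
  "Up V b = {c\<in>V. b < c}"
definition FF :: "nat \<Rightarrow> nat" where
  "FF m = (\<Sum>i<m. min i (m - 1 - i))"

lemma ap3_set: "{a + real i * d | i. i < (3::nat)} = {a, a + d, a + 2*d}"
proof -
  have e1: "{a + real i * d | i. i < (3::nat)} = (\<lambda>i. a + real i * d) ` {..<3}" by auto
  have e2: "{..<3::nat} = {0,1,2}" by auto
  show ?thesis unfolding e1 e2 by (simp add: algebra_simps)
qed

lemma is3: "is_kAP 3 P \<longleftrightarrow> (\<exists>a b. a < b \<and> P = {a, b, 2*b - a})"
proof
  assume "is_kAP 3 P"
  then obtain a d where "d > 0" "P = {a + real i * d | i. i < 3}" unfolding is_kAP_def by blast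
  then have "P = {a, a+d, 2*(a+d) - a}" "a < a + d" using ap3_set by auto
  then show "\<exists>a b. a < b \<and> P = {a, b, 2*b - a}" by blast
next
  assume "\<exists>a b. a < b \<and> P = {a, b, 2*b - a}"
  then obtain a b where ab: "a < b" "P = {a, b, 2*b - a}" by blast
  have "P = {a + real i * (b - a) | i. i < 3}" unfolding ap3_set using ab
    by (auto simp: algebra_simps)
  then show "is_kAP 3 P" unfolding is_kAP_def using ab(1) by (intro exI[of _ a] exI[of _ "b-a"]) auto
qed

lemma S_AP_sum:
  assumes fin: "finite V"
  shows "S_AP 3 V = (\<Sum>b\<in>V. card (Cs V b))"
proof -
  define g where "g = (\<lambda>(b::real,a::real). {a, b, 2*b - a})"
  have inj: "inj_on g (Sigma V (Cs V))"
  proof (rule inj_onI)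
    fix x y assume x: "x \<in> Sigma V (Cs V)" and y: "y \<in> Sigma V (Cs V)" and e: "g x = g y"
    obtain b a where xe: "x = (b,a)" by (cases x)
    obtain b' a' where ye: "y = (b',a')" by (cases y)
    have ab: "a < b" "a' < b'" using x y xe ye by (auto simp: Cs_def)
    have e2: "{a, b, 2*b - a} = {a', b', 2*b' - a'}" using e xe ye g_def by auto
    have "a \<in> {a', b', 2*b' - a'}" "a' \<in> {a, b, 2*b - a}" using e2 by blast+
    then have "a = a'" using ab by auto
    moreover have "2*b - a \<in> {a', b', 2*b' - a'}" "2*b'-a' \<in> {a, b, 2*b - a}" using e2 by blast+
    ultimately have "b = b'" using ab by auto
    then show "x = y" using xe ye \<open>a = a'\<close> by simp
  qed
  have img: "g ` Sigma V (Cs V) = {P. is_kAP 3 P \<and> P \<subseteq> V}"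
  proof
    show "g ` Sigma V (Cs V) \<subseteq> {P. is_kAP 3 P \<and> P \<subseteq> V}"
      by (auto simp: g_def Cs_def is3; blast)
  next
    show "{P. is_kAP 3 P \<and> P \<subseteq> V} \<subseteq> g ` Sigma V (Cs V)"
    proof
      fix P assume "P \<in> {P. is_kAP 3 P \<and> P \<subseteq> V}"
      then obtain a b where ab: "a < b" "P = {a, b, 2*b - a}" "P \<subseteq> V" by (auto simp: is3)
      then have "(b,a) \<in> Sigma V (Cs V)" by (auto simp: Cs_def)
      moreover have "P = g (b,a)" using ab g_def by simp
      ultimately show "P \<in> g ` Sigma V (Cs V)" by blast
    qed
  qed
  have "S_AP 3 V = card (g ` Sigma V (Cs V))" unfolding S_AP_def img ..
  also have "\<dots> = card (Sigma V (Cs V))" using card_image[OF inj] .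
  also have "\<dots> = (\<Sum>b\<in>V. card (Cs V b))"
    using fin by (intro card_SigmaI) (auto simp: Cs_def)
  finally show ?thesis .
qed


lemma Lo_bij:
  assumes fin: "finite V"
  shows "bij_betw (\<lambda>b. card (Lo V b)) V {..<card V}"
proof -
  have lt: "card (Lo V b) < card (Lo V b')" if "b \<in> V" "b' \<in> V" "b < b'" for b b'
  proof (rule psubset_card_mono)
    show "finite (Lo V b')" using fin by (simp add: Lo_def)
    show "Lo V b \<subset> Lo V b'" using that by (auto simp: Lo_def)
  qed
  have inj: "inj_on (\<lambda>b. card (Lo V b)) V"
  proof (rule inj_onI)
    fix x y assume "x \<in> V" "y \<in> V" "card (Lo V x) = card (Lo V y)"
    then show "x = y" using lt[of x y] lt[of y x] by (cases x y rule: linorder_cases) auto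
  qed
  have sub: "(\<lambda>b. card (Lo V b)) ` V \<subseteq> {..<card V}"
  proof
    fix i assume "i \<in> (\<lambda>b. card (Lo V b)) ` V"
    then obtain b where b: "b \<in> V" "i = card (Lo V b)" by blast
    have "Lo V b \<subset> V" using b by (auto simp: Lo_def)
    then have "card (Lo V b) < card V" using fin by (rule psubset_card_mono[rotated])
    then show "i \<in> {..<card V}" using b by simp
  qed
  have "card ((\<lambda>b. card (Lo V b)) ` V) = card {..<card V}"
    using card_image[OF inj] by simp
  then have "(\<lambda>b. card (Lo V b)) ` V = {..<card V}"
    using sub by (intro card_subset_eq) auto
  then show ?thesis using inj by (simp add: bij_betw_def)
qed

lemma card_Up:
  assumes fin: "finite V" and b: "b \<in> V"
  shows "card (Up V b) = card V - 1 - card (Lo V b)"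
proof -
  have e: "Up V b = (V - {b}) - Lo V b" by (auto simp: Up_def Lo_def)
  have s: "Lo V b \<subseteq> V - {b}" by (auto simp: Lo_def)
  have "card (Up V b) = card (V - {b}) - card (Lo V b)"
    unfolding e using fin s by (intro card_Diff_subset) (auto intro: finite_subset)
  then show ?thesis using b fin by simp
qed

lemma sum_min:
  assumes fin: "finite V"
  shows "(\<Sum>b\<in>V. min (card (Lo V b)) (card (Up V b))) = FF (card V)"
proof -
  define h where "h i = min i (card V - 1 - i)" for i
  have "(\<Sum>b\<in>V. min (card (Lo V b)) (card (Up V b))) = (\<Sum>b\<in>V. h (card (Lo V b)))"
    using fin by (intro sum.cong) (auto simp: h_def card_Up)
  also have "\<dots> = (\<Sum>i<card V. h i)"
    by (rule sum.reindex_bij_betw[OF Lo_bij[OF fin]])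
  finally show ?thesis by (simp add: FF_def h_def)
qed

lemma cnt_le:
  assumes fin: "finite V"
  shows "card (Cs V b) \<le> card (Lo V b)" "card (Cs V b) \<le> card (Up V b)"
proof -
  show "card (Cs V b) \<le> card (Lo V b)"
    using fin by (intro card_mono) (auto simp: Cs_def Lo_def)
  have inj: "inj_on (\<lambda>a. 2*b - a) (Cs V b)" by (auto intro: inj_onI)
  have "(\<lambda>a. 2*b - a) ` Cs V b \<subseteq> Up V b" by (auto simp: Cs_def Up_def)
  then have "card ((\<lambda>a. 2*b - a) ` Cs V b) \<le> card (Up V b)"
    using fin by (intro card_mono) (auto simp: Up_def)
  then show "card (Cs V b) \<le> card (Up V b)" using card_image[OF inj] by simp
qed

lemma S_le:
  assumes fin: "finite V"
  shows "S_AP 3 V \<le> FF (card V)"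
proof -
  have "S_AP 3 V = (\<Sum>b\<in>V. card (Cs V b))" using S_AP_sum[OF fin] .
  also have "\<dots> \<le> (\<Sum>b\<in>V. min (card (Lo V b)) (card (Up V b)))"
    by (intro sum_mono) (use cnt_le[OF fin] in auto)
  also have "\<dots> = FF (card V)" using sum_min[OF fin] .
  finally show ?thesis .
qed

lemma S_ge:
  assumes fin: "finite V"
    and pt: "\<And>b. b \<in> V \<Longrightarrow> min (card (Lo V b)) (card (Up V b)) \<le> card (Cs V b)"
  shows "FF (card V) \<le> S_AP 3 V"
proof -
  have "FF (card V) = (\<Sum>b\<in>V. min (card (Lo V b)) (card (Up V b)))" using sum_min[OF fin] by simp
  also have "\<dots> \<le> (\<Sum>b\<in>V. card (Cs V b))" by (intro sum_mono pt)
  also have "\<dots> = S_AP 3 V" using S_AP_sum[OF fin] by simp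
  finally show ?thesis .
qed

lemma interval0:
  "FF (card (real ` {..<m})) \<le> S_AP 3 (real ` {..<m})"
proof (rule S_ge)
  show "finite (real ` {..<m})" by simp
next
  fix b assume "b \<in> real ` {..<m}"
  then obtain k where k: "k < m" "b = real k" by blast
  define I where "I = real ` {..<m}"
  have lo: "Lo I b = real ` {..<k}" using k by (auto simp: Lo_def I_def)
  have clo: "card (Lo I b) = k" unfolding lo by (simp add: card_image)
  have cI: "card I = m" unfolding I_def by (simp add: card_image)
  have cup: "card (Up I b) = m - 1 - k"
    using card_Up[of I b] clo cI k by (auto simp: I_def)
  define t where "t = min k (m - 1 - k)"
  have "real ` {k - t..<k} \<subseteq> Cs I b"
  proof
    fix a assume "a \<in> real ` {k - t..<k}"
    then obtain j where j: "k - t \<le> j" "j < k" "a = real j" by auto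
    have "2 * k - j < m" using j k t_def by auto
    moreover have "2 * b - a = real (2 * k - j)" using j k by auto
    ultimately have "2 * b - a \<in> I" unfolding I_def by auto
    moreover have "a \<in> I" "a < b" using j k by (auto simp: I_def)
    ultimately show "a \<in> Cs I b" by (auto simp: Cs_def)
  qed
  then have "card (real ` {k - t..<k}) \<le> card (Cs I b)"
    by (intro card_mono) (auto simp: Cs_def I_def)
  moreover have "card (real ` {k - t..<k}) = t" by (simp add: card_image t_def)
  ultimately show "min (card (Lo (real ` {..<m}) b)) (card (Up (real ` {..<m}) b))
      \<le> card (Cs (real ` {..<m}) b)"
    using clo cup t_def I_def by simp
qed

lemma interval: "FF m \<le> S_AP 3 (real ` {..<m})"
  using interval0[of m] by (simp add: card_image)

lemma opt_iff: "optimal_AP 3 V \<longleftrightarrow> finite V \<and> S_AP 3 V = FF (card V)"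
proof
  assume o: "optimal_AP 3 V"
  then have fin: "finite V" by (simp add: optimal_AP_def)
  have "card (real ` {..<card V}) = card V" by (simp add: card_image)
  then have "S_AP 3 (real ` {..<card V}) \<le> S_AP 3 V" using o by (auto simp: optimal_AP_def)
  then have "FF (card V) \<le> S_AP 3 V" using interval[of "card V"] by simp
  then show "finite V \<and> S_AP 3 V = FF (card V)" using S_le[OF fin] fin by simp
next
  assume "finite V \<and> S_AP 3 V = FF (card V)"
  then show "optimal_AP 3 V" unfolding optimal_AP_def using S_le by metis
qed

lemma eq_each:
  assumes fin: "finite V" and S: "S_AP 3 V = FF (card V)" and b: "b \<in> V"
  shows "card (Cs V b) = min (card (Lo V b)) (card (Up V b))"
proof (rule sum_mono_inv[OF _ _ b fin])
  show "(\<Sum>b\<in>V. card (Cs V b)) = (\<Sum>b\<in>V. min (card (Lo V b)) (card (Up V b)))"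
    using S S_AP_sum[OF fin] sum_min[OF fin] by simp
  show "\<And>i. i \<in> V \<Longrightarrow> card (Cs V i) \<le> min (card (Lo V i)) (card (Up V i))"
    using cnt_le[OF fin] by simp
qed

lemma minrem:
  assumes fin: "finite V" and S: "S_AP 3 V = FF (card V)" and ne: "V \<noteq> {}"
    and c: "\<forall>b\<in>V. card (Up V b) < card (Lo V b) \<longrightarrow> Min V \<notin> Cs V b"
  shows "optimal_AP 3 (V - {Min V})"
proof -
  define m0 where "m0 = Min V"
  define W where "W = V - {m0}"
  have finW: "finite W" using fin by (simp add: W_def)
  have "FF (card W) \<le> S_AP 3 W"
  proof (rule S_ge[OF finW])
    fix b assume bW: "b \<in> W"
    then have bV: "b \<in> V" and m0b: "m0 < b"
      using Min_le[OF fin, of b] by (auto simp: W_def m0_def order_le_less)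
    have "Lo W b = Lo V b - {m0}" by (auto simp: Lo_def W_def)
    moreover have "m0 \<in> Lo V b" using m0b Min_in[OF fin ne] by (auto simp: Lo_def m0_def)
    ultimately have lo: "card (Lo W b) = card (Lo V b) - 1"
      using fin by (simp add: Lo_def)
    have up: "Up W b = Up V b" using m0b by (auto simp: Up_def W_def)
    have cs: "Cs W b = Cs V b - {m0}" using m0b by (auto simp: Cs_def W_def)
    have ccs: "card (Cs W b) = (if m0 \<in> Cs V b then card (Cs V b) - 1 else card (Cs V b))"
      unfolding cs by (rule card_Diff_singleton_if)
    have e: "card (Cs V b) = min (card (Lo V b)) (card (Up V b))" using eq_each[OF fin S bV] .
    show "min (card (Lo W b)) (card (Up W b)) \<le> card (Cs W b)"
    proof (cases "card (Up V b) < card (Lo V b)")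
      case True
      then have "m0 \<notin> Cs V b" using c bV m0_def by auto
      then show ?thesis using ccs e lo up True by auto
    next
      case False
      then show ?thesis using ccs e lo up by auto
    qed
  qed
  then show ?thesis using S_le[OF finW] finW by (simp add: opt_iff W_def m0_def)
qed

lemma maxrem:
  assumes fin: "finite V" and S: "S_AP 3 V = FF (card V)" and ne: "V \<noteq> {}"
    and c: "\<forall>b\<in>V. card (Lo V b) < card (Up V b) \<longrightarrow> 2 * b - Max V \<notin> Cs V b"
  shows "optimal_AP 3 (V - {Max V})"
proof -
  define M where "M = Max V"
  define W where "W = V - {M}"
  have finW: "finite W" using fin by (simp add: W_def)
  have "FF (card W) \<le> S_AP 3 W"
  proof (rule S_ge[OF finW])
    fix b assume bW: "b \<in> W"
    then have bV: "b \<in> V" and Mb: "b < M"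
      using Max_ge[OF fin, of b] by (auto simp: W_def M_def order_le_less)
    have "Up W b = Up V b - {M}" by (auto simp: Up_def W_def)
    moreover have "M \<in> Up V b" using Mb Max_in[OF fin ne] by (auto simp: Up_def M_def)
    ultimately have up: "card (Up W b) = card (Up V b) - 1"
      using fin by (simp add: Up_def)
    have lo: "Lo W b = Lo V b" using Mb by (auto simp: Lo_def W_def)
    have cs: "Cs W b = Cs V b - {2 * b - M}" using Mb by (auto simp: Cs_def W_def)
    have ccs: "card (Cs W b) = (if 2 * b - M \<in> Cs V b then card (Cs V b) - 1 else card (Cs V b))"
      unfolding cs by (rule card_Diff_singleton_if)
    have e: "card (Cs V b) = min (card (Lo V b)) (card (Up V b))" using eq_each[OF fin S bV] .
    show "min (card (Lo W b)) (card (Up W b)) \<le> card (Cs W b)"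
    proof (cases "card (Lo V b) < card (Up V b)")
      case True
      then have "2 * b - M \<notin> Cs V b" using c bV M_def by auto
      then show ?thesis using ccs e lo up True by auto
    next
      case False
      then show ?thesis using ccs e lo up by auto
    qed
  qed
  then show ?thesis using S_le[OF finW] finW by (simp add: opt_iff W_def M_def)
qed

lemma mid1:
  assumes fin: "finite V" and S: "S_AP 3 V = FF (card V)" and b: "b \<in> V"
    and lt: "card (Up V b) < card (Lo V b)" and m: "Min V \<in> Cs V b"
  shows "Max V = 2 * b - Min V"
proof -
  have ne: "V \<noteq> {}" using b by auto
  have e: "card (Cs V b) = card (Up V b)" using eq_each[OF fin S b] lt by simp
  have inj: "inj_on (\<lambda>a. 2*b - a) (Cs V b)" by (auto intro: inj_onI)
  have sub: "(\<lambda>a. 2*b - a) ` Cs V b \<subseteq> Up V b" by (auto simp: Cs_def Up_def)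
  have "(\<lambda>a. 2*b - a) ` Cs V b = Up V b"
    using sub card_image[OF inj] e fin by (intro card_subset_eq) (auto simp: Up_def)
  have v: "2 * b - Min V \<in> V" "Min V < b" using m by (auto simp: Cs_def)
  have le1: "2 * b - Min V \<le> Max V" using Max_ge[OF fin v(1)] .
  have "Max V \<in> Up V b" using le1 v(2) Max_in[OF fin ne] by (auto simp: Up_def)
  then obtain a where a: "a \<in> Cs V b" "Max V = 2 * b - a"
    using \<open>(\<lambda>a. 2*b - a) ` Cs V b = Up V b\<close> by (metis (no_types, lifting) imageE)
  have "Min V \<le> a" using a(1) Min_le[OF fin] by (auto simp: Cs_def)
  then show ?thesis using a le1 by linarith
qed

lemma mid2:
  assumes fin: "finite V" and S: "S_AP 3 V = FF (card V)" and b: "b \<in> V"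
    and lt: "card (Lo V b) < card (Up V b)" and m: "2 * b - Max V \<in> Cs V b"
  shows "Max V = 2 * b - Min V"
proof -
  have ne: "V \<noteq> {}" using b by auto
  have e: "card (Cs V b) = card (Lo V b)" using eq_each[OF fin S b] lt by simp
  have sub: "Cs V b \<subseteq> Lo V b" by (auto simp: Cs_def Lo_def)
  have eq: "Cs V b = Lo V b"
    using sub e fin by (intro card_subset_eq) (auto simp: Lo_def)
  have a2: "2 * b - Max V \<in> V" "2 * b - Max V < b" using m by (auto simp: Cs_def)
  have "Min V \<le> 2 * b - Max V" using Min_le[OF fin a2(1)] .
  then have "Min V \<in> Lo V b" using a2 Min_in[OF fin ne] by (auto simp: Lo_def)
  then have "2 * b - Min V \<in> V" using eq by (auto simp: Cs_def)
  then have "2 * b - Min V \<le> Max V" using Max_ge[OF fin] by blast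
  then show ?thesis using \<open>Min V \<le> 2 * b - Max V\<close> by linarith
qed

theorem mainTheorem9:
  fixes V :: "real set" and n :: nat
  assumes "n \<ge> 2" and "finite V" and "card V = n" and "optimal_AP 3 V"
  shows "optimal_AP 3 (V - {Min V}) \<or> optimal_AP 3 (V - {Max V})"
proof -
  have fin: "finite V" and S: "S_AP 3 V = FF (card V)" using assms(4) by (auto simp: opt_iff)
  have ne: "V \<noteq> {}" using assms(1,3) by auto
  show ?thesis
  proof (rule ccontr)
    assume "\<not> ?thesis"
    then have n1: "\<not> (\<forall>b\<in>V. card (Up V b) < card (Lo V b) \<longrightarrow> Min V \<notin> Cs V b)"
      and n2: "\<not> (\<forall>b\<in>V. card (Lo V b) < card (Up V b) \<longrightarrow> 2 * b - Max V \<notin> Cs V b)"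
      using minrem[OF fin S ne] maxrem[OF fin S ne] by blast+
    obtain b1 where b1: "b1 \<in> V" "card (Up V b1) < card (Lo V b1)" "Min V \<in> Cs V b1"
      using n1 by blast
    obtain b2 where b2: "b2 \<in> V" "card (Lo V b2) < card (Up V b2)" "2 * b2 - Max V \<in> Cs V b2"
      using n2 by blast
    have "b1 = b2" using mid1[OF fin S b1] mid2[OF fin S b2] by linarith
    then show False using b1(2) b2(2) by simp
  qed
qed

end
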